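(* An own-peak-only rule $\varphi$ on $\mathcal{E}_{\mathcal{SP}}$ is simple if and only if for each economy $(R,\Omega)\in\mathcal{E}_{\mathcal{SP}}$: (i) $\varphi_i(R,\Omega)=p(R_i)$ for every $i\in N^+(R,\Omega)$, and (ii) for every $i\in N^-(R,\Omega)$, $\varphi_i(R,\Omega)$ lies between $\frac{\Omega}{n}$ and $p(R_i)$ (i.e., in the closed interval with these endpoints).
   Context: Let $N=\{1,\dots,n\}$ be a finite set of agents. A preference $R_i$ is a continuous complete preorder on $\mathbb{R}_+\cup\{\infty\}$; its peak $p(R_i)$ is the set of maximal elements. $R_i$ is single-peaked if $p(R_i)$ is a singleton (identified with its element) and for $x,x'\in\mathbb{R}_+$, $x$ is strictly preferred to $x'$ whenever $x'<x\le p(R_i)$ or $p(R_i)\le x<x'$; $\mathcal{SP}$ is the set of these. An economy is $(R,\Omega)$, $R\in\mathcal{SP}^n$, $\Omega>0$; $\mathcal{E}_{\mathcal{SP}}$ is the set of economies; a rule is a map $\varphi:\mathcal{E}_{\mathcal{SP}}\to\mathbb{R}^n_+$ with $\sum_j\varphi_j(R,\Omega)=\Omega$. Own-peak-only: $p(R_i')=p(R_i)$ implies $\varphi_i(R,\Omega)=\varphi_i(R_i',R_{-i},\Omega)$. Let $z(R,\Omega)=\sum_jp(R_j)-\Omega$. Agent $i$ is simple if ($z\ge0$ and $p(R_i)<\Omega/n$) or ($z\le0$ and $p(R_i)>\Omega/n$); $N^+(R,\Omega)$ is the set of simple agents and $N^-(R,\Omega)=N\setminus N^+(R,\Omega)$;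 $E(R,\Omega)=\left|\Omega-\left(\sum_{j\in N^+}p(R_j)+|N^-|\frac{\Omega}{n}\right)\right|$. An own-peak-only rule $\varphi$ is simple if for every economy and $i$: $\varphi_i=p(R_i)$ for $i\in N^+$; $\varphi_i=\frac{\Omega}{n}+\nu_i$ for $i\in N^-$ when $z\ge0$; $\varphi_i=\frac{\Omega}{n}-\nu_i$ for $i\in N^-$ when $z\le0$; where $0\le\nu_i\le|p(R_i)-\frac{\Omega}{n}|$ and $\sum_{j\in N^-}\nu_j=E(R,\Omega)$. *)

theory Defs
  imports "HOL-Analysis.Analysis"
begin

text \<open>Consumption space R+ \<union> {\<infinity>}, modelled inside the extended reals.\<close>
definition cspace :: "ereal set" where
  "cspace = {x. 0 \<le> x \<and> x \<noteq> -\<infinity>}"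

type_synonym pref = "ereal \<Rightarrow> ereal \<Rightarrow> bool"
  (* R x y : x is at least as good as y *)

definition strict :: "pref \<Rightarrow> ereal \<Rightarrow> ereal \<Rightarrow> bool" where
  "strict R x y \<longleftrightarrow> R x y \<and> \<not> R y x"

definition is_pref :: "pref \<Rightarrow> bool" where
  "is_pref R \<longleftrightarrow>
     (\<forall>x\<in>cspace. R x x) \<and>
     (\<forall>x\<in>cspace. \<forall>y\<in>cspace. \<forall>w\<in>cspace. R x y \<longrightarrow> R y w \<longrightarrow> R x w) \<and>
     (\<forall>x\<in>cspace. \<forall>y\<in>cspace. R x y \<or> R y x) \<and>
     (\<forall>x\<in>cspace. closed {y\<in>cspace. R y x} \<and> closed {y\<in>cspace. R x y})"

definition peak :: "pref \<Rightarrow> ereal set" where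
  "peak R = {x\<in>cspace. \<forall>y\<in>cspace. R x y}"

definition pk :: "pref \<Rightarrow> ereal" where
  "pk R = the_elem (peak R)"

definition single_peaked :: "pref \<Rightarrow> bool" where
  "single_peaked R \<longleftrightarrow> is_pref R \<and> (\<exists>p. peak R = {p}) \<and>
     (\<forall>x x'::real. 0 \<le> x \<longrightarrow> 0 \<le> x' \<longrightarrow>
        ((x' < x \<and> ereal x \<le> pk R) \<or> (pk R \<le> ereal x \<and> x < x'))
        \<longrightarrow> strict R (ereal x) (ereal x'))"

text \<open>Agents are the elements of a finite type 'n; n = CARD('n).\<close>
definition economy :: "('n::finite \<Rightarrow> pref) \<Rightarrow> real \<Rightarrow> bool" where
  "economy R \<Omega> \<longleftrightarrow> \<Omega> > 0 \<and> (\<forall>i. single_peaked (R i))"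

definition is_rule :: "(('n::finite \<Rightarrow> pref) \<Rightarrow> real \<Rightarrow> 'n \<Rightarrow> real) \<Rightarrow> bool" where
  "is_rule \<phi> \<longleftrightarrow> (\<forall>R \<Omega>. economy R \<Omega> \<longrightarrow>
      (\<forall>i. 0 \<le> \<phi> R \<Omega> i) \<and> (\<Sum>j\<in>UNIV. \<phi> R \<Omega> j) = \<Omega>)"

definition own_peak_only :: "(('n::finite \<Rightarrow> pref) \<Rightarrow> real \<Rightarrow> 'n \<Rightarrow> real) \<Rightarrow> bool" where
  "own_peak_only \<phi> \<longleftrightarrow> (\<forall>R \<Omega> i R'. economy R \<Omega> \<longrightarrow> single_peaked R' \<longrightarrow>
      pk R' = pk (R i) \<longrightarrow> \<phi> R \<Omega> i = \<phi> (R(i := R')) \<Omega> i)"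

definition share :: "real \<Rightarrow> 'n::finite itself \<Rightarrow> real" where
  "share \<Omega> _ = \<Omega> / real CARD('n)"

definition zexc :: "('n::finite \<Rightarrow> pref) \<Rightarrow> real \<Rightarrow> ereal" where
  "zexc R \<Omega> = (\<Sum>j\<in>UNIV. pk (R j)) - ereal \<Omega>"

definition simple_agent :: "('n::finite \<Rightarrow> pref) \<Rightarrow> real \<Rightarrow> 'n \<Rightarrow> bool" where
  "simple_agent R \<Omega> i \<longleftrightarrow>
     (zexc R \<Omega> \<ge> 0 \<and> pk (R i) < ereal (share \<Omega> TYPE('n))) \<or>
     (zexc R \<Omega> \<le> 0 \<and> pk (R i) > ereal (share \<Omega> TYPE('n)))"

definition Nplus :: "('n::finite \<Rightarrow> pref) \<Rightarrow> real \<Rightarrow> 'n set" where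
  "Nplus R \<Omega> = {i. simple_agent R \<Omega> i}"

definition Nminus :: "('n::finite \<Rightarrow> pref) \<Rightarrow> real \<Rightarrow> 'n set" where
  "Nminus R \<Omega> = UNIV - Nplus R \<Omega>"

definition Eexc :: "('n::finite \<Rightarrow> pref) \<Rightarrow> real \<Rightarrow> ereal" where
  "Eexc R \<Omega> = \<bar>ereal \<Omega> - ((\<Sum>j\<in>Nplus R \<Omega>. pk (R j))
        + ereal (real (card (Nminus R \<Omega>)) * share \<Omega> TYPE('n)))\<bar>"

definition simple_rule :: "(('n::finite \<Rightarrow> pref) \<Rightarrow> real \<Rightarrow> 'n \<Rightarrow> real) \<Rightarrow> bool" where
  "simple_rule \<phi> \<longleftrightarrow> own_peak_only \<phi> \<and>
    (\<forall>R \<Omega>. economy R \<Omega> \<longrightarrow> (\<exists>\<nu>::'n \<Rightarrow> real.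
       (\<forall>i\<in>Nplus R \<Omega>. ereal (\<phi> R \<Omega> i) = pk (R i)) \<and>
       (zexc R \<Omega> \<ge> 0 \<longrightarrow> (\<forall>i\<in>Nminus R \<Omega>. \<phi> R \<Omega> i = share \<Omega> TYPE('n) + \<nu> i)) \<and>
       (zexc R \<Omega> \<le> 0 \<longrightarrow> (\<forall>i\<in>Nminus R \<Omega>. \<phi> R \<Omega> i = share \<Omega> TYPE('n) - \<nu> i)) \<and>
       (\<forall>i\<in>Nminus R \<Omega>. 0 \<le> \<nu> i \<and>
           ereal (\<nu> i) \<le> \<bar>pk (R i) - ereal (share \<Omega> TYPE('n))\<bar>) \<and>
       ereal (\<Sum>j\<in>Nminus R \<Omega>. \<nu> j) = Eexc R \<Omega>))"

end

theory Submission
  imports Defs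
begin

lemma nminus_ge:
  fixes R :: "'n::finite \<Rightarrow> pref"
  assumes "i \<in> Nminus R \<Omega>" "zexc R \<Omega> \<ge> 0"
  shows "pk (R i) \<ge> ereal (share \<Omega> TYPE('n::finite))"
  using assms by (auto simp: Nminus_def Nplus_def simple_agent_def not_less)

lemma nminus_le:
  fixes R :: "'n::finite \<Rightarrow> pref"
  assumes "i \<in> Nminus R \<Omega>" "zexc R \<Omega> \<le> 0"
  shows "pk (R i) \<le> ereal (share \<Omega> TYPE('n::finite))"
  using assms by (auto simp: Nminus_def Nplus_def simple_agent_def not_less)

lemma fwd:
  fixes \<phi> :: "('n::finite \<Rightarrow> pref) \<Rightarrow> real \<Rightarrow> 'n \<Rightarrow> real"
  assumes "simple_rule \<phi>" "economy R \<Omega>"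
  shows "(\<forall>i\<in>Nplus R \<Omega>. ereal (\<phi> R \<Omega> i) = pk (R i)) \<and>
       (\<forall>i\<in>Nminus R \<Omega>.
          min (ereal (share \<Omega> TYPE('n))) (pk (R i)) \<le> ereal (\<phi> R \<Omega> i) \<and>
          ereal (\<phi> R \<Omega> i) \<le> max (ereal (share \<Omega> TYPE('n))) (pk (R i)))"
proof -
  let ?s = "share \<Omega> TYPE('n)"
  obtain \<nu> where P: "\<forall>i\<in>Nplus R \<Omega>. ereal (\<phi> R \<Omega> i) = pk (R i)"
     and A: "zexc R \<Omega> \<ge> 0 \<longrightarrow> (\<forall>i\<in>Nminus R \<Omega>. \<phi> R \<Omega> i = ?s + \<nu> i)"
     and B: "zexc R \<Omega> \<le> 0 \<longrightarrow> (\<forall>i\<in>Nminus R \<Omega>. \<phi> R \<Omega> i = ?s - \<nu> i)"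
     and C: "\<forall>i\<in>Nminus R \<Omega>. 0 \<le> \<nu> i \<and> ereal (\<nu> i) \<le> \<bar>pk (R i) - ereal ?s\<bar>"
    using mp[OF spec[OF spec[OF conjunct2[OF assms(1)[unfolded simple_rule_def]], of R], of \<Omega>] assms(2)]
    by (elim exE conjE) (rule that)
  have "min (ereal ?s) (pk (R i)) \<le> ereal (\<phi> R \<Omega> i) \<and>
          ereal (\<phi> R \<Omega> i) \<le> max (ereal ?s) (pk (R i))" if i: "i \<in> Nminus R \<Omega>" for i
  proof (cases "zexc R \<Omega> \<ge> 0")
    case True
    have ge: "pk (R i) \<ge> ereal ?s" using nminus_ge[OF i True] .
    have e: "\<phi> R \<Omega> i = ?s + \<nu> i" using A True i by blast
    have c: "0 \<le> \<nu> i" "ereal (\<nu> i) \<le> \<bar>pk (R i) - ereal ?s\<bar>" using C i by auto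
    show ?thesis using ge e c by (cases "pk (R i)") (auto simp: min_def max_def)
  next
    case False
    then have F: "zexc R \<Omega> \<le> 0" by simp
    have le: "pk (R i) \<le> ereal ?s" using nminus_le[OF i F] .
    have e: "\<phi> R \<Omega> i = ?s - \<nu> i" using B F i by blast
    have c: "0 \<le> \<nu> i" "ereal (\<nu> i) \<le> \<bar>pk (R i) - ereal ?s\<bar>" using C i by auto
    show ?thesis using le e c by (cases "pk (R i)") (auto simp: min_def max_def)
  qed
  then show ?thesis using P by blast
qed

lemma bwd:
  fixes \<phi> :: "('n::finite \<Rightarrow> pref) \<Rightarrow> real \<Rightarrow> 'n \<Rightarrow> real"
  assumes rule: "is_rule \<phi>" and econ: "economy R \<Omega>"
  and P: "\<forall>i\<in>Nplus R \<Omega>. ereal (\<phi> R \<Omega> i) = pk (R i)"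
  and M: "\<forall>i\<in>Nminus R \<Omega>.
          min (ereal (share \<Omega> TYPE('n))) (pk (R i)) \<le> ereal (\<phi> R \<Omega> i) \<and>
          ereal (\<phi> R \<Omega> i) \<le> max (ereal (share \<Omega> TYPE('n))) (pk (R i))"
  shows "\<exists>\<nu>::'n \<Rightarrow> real.
       (\<forall>i\<in>Nplus R \<Omega>. ereal (\<phi> R \<Omega> i) = pk (R i)) \<and>
       (zexc R \<Omega> \<ge> 0 \<longrightarrow> (\<forall>i\<in>Nminus R \<Omega>. \<phi> R \<Omega> i = share \<Omega> TYPE('n) + \<nu> i)) \<and>
       (zexc R \<Omega> \<le> 0 \<longrightarrow> (\<forall>i\<in>Nminus R \<Omega>. \<phi> R \<Omega> i = share \<Omega> TYPE('n) - \<nu> i)) \<and>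
       (\<forall>i\<in>Nminus R \<Omega>. 0 \<le> \<nu> i \<and>
           ereal (\<nu> i) \<le> \<bar>pk (R i) - ereal (share \<Omega> TYPE('n))\<bar>) \<and>
       ereal (\<Sum>j\<in>Nminus R \<Omega>. \<nu> j) = Eexc R \<Omega>"
proof -
  let ?s = "share \<Omega> TYPE('n)"
  let ?f = "\<phi> R \<Omega>"
  define \<nu> where "\<nu> i = \<bar>?f i - ?s\<bar>" for i
  have A: "?f i = ?s + \<nu> i" if "zexc R \<Omega> \<ge> 0" "i \<in> Nminus R \<Omega>" for i
  proof -
    have "pk (R i) \<ge> ereal ?s" using nminus_ge that by blast
    then have "ereal ?s \<le> ereal (?f i)" using M that by (auto simp: min_def split: if_splits)
    then show ?thesis by (simp add: \<nu>_def)
  qed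
  have B: "?f i = ?s - \<nu> i" if "zexc R \<Omega> \<le> 0" "i \<in> Nminus R \<Omega>" for i
  proof -
    have "pk (R i) \<le> ereal ?s" using nminus_le that by blast
    then have "ereal (?f i) \<le> ereal ?s" using M that by (auto simp: max_def split: if_splits)
    then show ?thesis by (simp add: \<nu>_def)
  qed
  have C: "0 \<le> \<nu> i \<and> ereal (\<nu> i) \<le> \<bar>pk (R i) - ereal ?s\<bar>" if i: "i \<in> Nminus R \<Omega>" for i
  proof -
    have m: "min (ereal ?s) (pk (R i)) \<le> ereal (?f i)" "ereal (?f i) \<le> max (ereal ?s) (pk (R i))"
      using M i by auto
    show ?thesis using m unfolding \<nu>_def
      by (cases "pk (R i)") (auto simp: min_def max_def split: if_splits)
  qed
  have sumf: "(\<Sum>j\<in>UNIV. ?f j) = \<Omega>" using rule econ unfolding is_rule_def by blast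
  have disj: "Nplus R \<Omega> \<inter> Nminus R \<Omega> = {}" "Nplus R \<Omega> \<union> Nminus R \<Omega> = UNIV"
    by (auto simp: Nminus_def)
  have split: "(\<Sum>j\<in>UNIV. ?f j) = (\<Sum>j\<in>Nplus R \<Omega>. ?f j) + (\<Sum>j\<in>Nminus R \<Omega>. ?f j)"
    using sum.union_disjoint[of "Nplus R \<Omega>" "Nminus R \<Omega>" ?f] disj by simp
  have pks: "(\<Sum>j\<in>Nplus R \<Omega>. pk (R j)) = ereal (\<Sum>j\<in>Nplus R \<Omega>. ?f j)"
  proof -
    have "(\<Sum>j\<in>Nplus R \<Omega>. pk (R j)) = (\<Sum>j\<in>Nplus R \<Omega>. ereal (?f j))"
      using P by (intro sum.cong) auto
    then show ?thesis by (simp add: sum_ereal)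
  qed
  have dif: "(\<Sum>j\<in>Nminus R \<Omega>. ?f j - ?s) = \<Omega> - ((\<Sum>j\<in>Nplus R \<Omega>. ?f j) + real (card (Nminus R \<Omega>)) * ?s)"
    using sumf split by (simp add: sum_subtractf)
  have E: "Eexc R \<Omega> = ereal \<bar>\<Sum>j\<in>Nminus R \<Omega>. ?f j - ?s\<bar>"
    unfolding Eexc_def pks dif by simp
  have S: "\<bar>\<Sum>j\<in>Nminus R \<Omega>. ?f j - ?s\<bar> = (\<Sum>j\<in>Nminus R \<Omega>. \<nu> j)"
  proof (cases "zexc R \<Omega> \<ge> 0")
    case True
    have "(\<Sum>j\<in>Nminus R \<Omega>. ?f j - ?s) = (\<Sum>j\<in>Nminus R \<Omega>. \<nu> j)"
      using A[OF True] by (intro sum.cong) auto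
    moreover have "(\<Sum>j\<in>Nminus R \<Omega>. \<nu> j) \<ge> 0" by (auto simp: \<nu>_def intro: sum_nonneg)
    ultimately show ?thesis by simp
  next
    case False
    then have F: "zexc R \<Omega> \<le> 0" by simp
    have "(\<Sum>j\<in>Nminus R \<Omega>. ?f j - ?s) = - (\<Sum>j\<in>Nminus R \<Omega>. \<nu> j)"
      using B[OF F] by (simp add: sum_negf[symmetric])
    moreover have "(\<Sum>j\<in>Nminus R \<Omega>. \<nu> j) \<ge> 0" by (auto simp: \<nu>_def intro: sum_nonneg)
    ultimately show ?thesis by simp
  qed
  show ?thesis
    apply (rule exI[of _ \<nu>])
    apply (intro conjI)
    subgoal by (rule P)
    subgoal using A by blast
    subgoal using B by blast
    subgoal using C by blast
    subgoal using E S by simp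
    done
qed

theorem lemma1:
  fixes \<phi> :: "('n::finite \<Rightarrow> pref) \<Rightarrow> real \<Rightarrow> 'n \<Rightarrow> real"
  assumes "is_rule \<phi>" and "own_peak_only \<phi>"
  shows "simple_rule \<phi> \<longleftrightarrow>
    (\<forall>R \<Omega>. economy R \<Omega> \<longrightarrow>
       (\<forall>i\<in>Nplus R \<Omega>. ereal (\<phi> R \<Omega> i) = pk (R i)) \<and>
       (\<forall>i\<in>Nminus R \<Omega>.
          min (ereal (share \<Omega> TYPE('n))) (pk (R i)) \<le> ereal (\<phi> R \<Omega> i) \<and>
          ereal (\<phi> R \<Omega> i) \<le> max (ereal (share \<Omega> TYPE('n))) (pk (R i))))"
  (is "?L \<longleftrightarrow> ?R")
proof
  assume "?L"
  then show "?R" by (intro allI impI fwd)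
next
  assume H: "?R"
  show "?L"
    unfolding simple_rule_def
    apply (rule conjI)
     apply (rule assms(2))
    apply (intro allI impI)
    subgoal for R \<Omega>
      apply (rule bwd[OF assms(1)])
        apply assumption
       apply (rule conjunct1[OF mp[OF spec[OF spec[OF H, of R], of \<Omega>]]], assumption)
      apply (rule conjunct2[OF mp[OF spec[OF spec[OF H, of R], of \<Omega>]]], assumption)
      done
    done
qed

end
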